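(* Let $x,y>0$, $r,s\in\mathbb{R}$, and $F_{r,s;x,y}(w)=E(r+w,s+w;x,y)$ for $w\in\mathbb{R}$. Then for every $w\in\mathbb{R}$, $$\frac{F_{r,s;x,y}'(w)}{F_{r,s;x,y}(w)}=\frac{F_{r,s;x,y}'(-w-(s+r))}{F_{r,s;x,y}(-w-(s+r))} \quad\text{and}\quad F_{r,s;x,y}(w)\,F_{r,s;x,y}(-w)=\frac{xy\,F_{r,s;x,y}(w)}{F_{r,s;x,y}(w-(s+r))}.$$
   Context: For $x,y>0$ and $r,s\in\mathbb{R}$ the extended mean values are defined by $E(r,s;x,y)=\bigl(\frac{r}{s}\cdot\frac{y^s-x^s}{y^r-x^r}\bigr)^{1/(s-r)}$ if $rs(r-s)(x-y)\neq0$; $E(r,0;x,y)=E(0,r;x,y)=\bigl(\frac1r\cdot\frac{y^r-x^r}{\ln y-\ln x}\bigr)^{1/r}$ if $r(x-y)\neq0$; $E(r,r;x,y)=e^{-1/r}\bigl(\frac{x^{x^r}}{y^{y^r}}\bigr)^{1/(x^r-y^r)}$ if $r(x-y)\neq0$; $E(0,0;x,y)=\sqrt{xy}$ if $x\neq y$; $E(r,s;x,x)=x$. *)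

theory Defs
  imports "HOL-Analysis.Analysis"
begin

definition extmean :: "real \<Rightarrow> real \<Rightarrow> real \<Rightarrow> real \<Rightarrow> real" where
  "extmean r s x y =
    (if x = y then x
     else if r \<noteq> 0 \<and> s \<noteq> 0 \<and> r \<noteq> s then
       ((r / s) * (y powr s - x powr s) / (y powr r - x powr r)) powr (1 / (s - r))
     else if r \<noteq> 0 \<and> s = 0 then
       ((1 / r) * (y powr r - x powr r) / (ln y - ln x)) powr (1 / r)
     else if r = 0 \<and> s \<noteq> 0 then
       ((1 / s) * (y powr s - x powr s) / (ln y - ln x)) powr (1 / s)
     else if r \<noteq> 0 \<and> r = s then
       exp (- 1 / r) * ((x powr (x powr r)) / (y powr (y powr r))) powr (1 / (x powr r - y powr r))
     else sqrt (x * y))"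

end

theory Submission imports Defs begin

definition cc :: "real \<Rightarrow> real \<Rightarrow> nat \<Rightarrow> real" where
  "cc a b n = (b^(Suc n) - a^(Suc n)) / fact (Suc n)"
definition phi :: "real \<Rightarrow> real \<Rightarrow> real \<Rightarrow> real" where
  "phi a b t = (\<Sum>n. cc a b n * t^n)"
definition phi1 :: "real \<Rightarrow> real \<Rightarrow> real \<Rightarrow> real" where
  "phi1 a b t = (\<Sum>n. diffs (cc a b) n * t^n)"
definition phi2 :: "real \<Rightarrow> real \<Rightarrow> real \<Rightarrow> real" where
  "phi2 a b t = (\<Sum>n. diffs (diffs (cc a b)) n * t^n)"

lemma phi_sums:
  assumes "t \<noteq> 0"
  shows "(\<lambda>n. cc a b n * t^n) sums ((exp(t*b)-exp(t*a))/t)"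
proof -
  have "(\<lambda>n. (t*b)^n / fact n - (t*a)^n / fact n) sums (exp(t*b)-exp(t*a))"
    using sums_diff[OF exp_converges[of "t*b"] exp_converges[of "t*a"]]
    by (simp add: divide_inverse mult.commute)
  hence "(\<lambda>n. (t*b)^(Suc n) / fact (Suc n) - (t*a)^(Suc n) / fact (Suc n)) sums (exp(t*b)-exp(t*a))"
    by (subst sums_Suc_iff) simp
  hence "(\<lambda>n. ((t*b)^(Suc n) / fact (Suc n) - (t*a)^(Suc n) / fact (Suc n)) / t) sums ((exp(t*b)-exp(t*a))/t)"
    by (rule sums_divide)
  moreover have "\<And>n. ((t*b)^(Suc n) / fact (Suc n) - (t*a)^(Suc n) / fact (Suc n)) / t = cc a b n * t^n"
  proof -
    fix n
    have "\<And>f::real. f \<noteq> 0 \<Longrightarrow> ((t*b)^(Suc n) / f - (t*a)^(Suc n) / f) / t = (b^Suc n - a^Suc n) / f * t^n"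
      using assms by (simp add: power_mult_distrib field_simps)
    thus "((t*b)^(Suc n) / fact (Suc n) - (t*a)^(Suc n) / fact (Suc n)) / t = cc a b n * t^n"
      unfolding cc_def by (metis fact_nonzero)
  qed
  ultimately show ?thesis by simp
qed

lemma phi_summable: "summable (\<lambda>n. cc a b n * t^n)"
proof (cases "t = 0")
  case True thus ?thesis by simp
next
  case False thus ?thesis using phi_sums sums_summable by blast
qed

lemma phi_eq: "t \<noteq> 0 \<Longrightarrow> phi a b t = (exp(t*b)-exp(t*a))/t"
  unfolding phi_def using phi_sums sums_unique by metis

lemma phi_0: "phi a b 0 = b - a"
  unfolding phi_def by (simp only: powser_zero) (simp add: cc_def)

lemma phi1_0: "phi1 a b 0 = (b^2 - a^2)/2"
  unfolding phi1_def by (simp only: powser_zero) (simp add: cc_def diffs_def numeral_2_eq_2)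

lemma phi1_summable: "summable (\<lambda>n. diffs (cc a b) n * t^n)"
  by (rule termdiff_converges_all) (rule phi_summable)

lemma phi_deriv: "(phi a b has_real_derivative phi1 a b t) (at t)"
  unfolding phi_def phi1_def
  by (rule termdiffs_strong_converges_everywhere) (rule phi_summable)

lemma phi1_deriv: "(phi1 a b has_real_derivative phi2 a b t) (at t)"
  unfolding phi1_def phi2_def
  by (rule termdiffs_strong_converges_everywhere) (rule phi1_summable)

lemma phi_pos: assumes "a \<noteq> b" shows "(b - a) * phi a b t > 0"
proof (cases "t = 0")
  case True thus ?thesis using assms by (simp add: phi_0 power2_eq_square[symmetric])
next
  case False
  have "(t*b - t*a) * (exp(t*b) - exp(t*a)) > 0"
  proof (cases "t*b > t*a")
    case True thus ?thesis by simp
  next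
    case False
    have "t*b \<noteq> t*a" using \<open>t \<noteq> 0\<close> assms by simp
    hence "t*b < t*a" using False by linarith
    thus ?thesis by (simp add: mult_neg_neg)
  qed
  hence "(t*b - t*a) * (exp(t*b) - exp(t*a)) / t^2 > 0" using False by simp
  moreover have "(t*b - t*a) * (exp(t*b) - exp(t*a)) / t^2 = (b - a) * phi a b t"
    using False by (simp add: phi_eq power2_eq_square field_simps)
  ultimately show ?thesis by simp
qed

lemma phi_nz: "a \<noteq> b \<Longrightarrow> phi a b t \<noteq> 0"
  using phi_pos[of a b t] by auto

lemma phi_neg: "phi a b (-t) = phi a b t * exp(-t*(a+b))"
proof (cases "t = 0")
  case True thus ?thesis by simp
next
  case False
  thus ?thesis by (simp add: phi_eq field_simps exp_add[symmetric] exp_diff[symmetric])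
qed


lemma phi1_neg: "phi1 a b (-t) = (a+b) * phi a b t * exp(-t*(a+b)) - phi1 a b t * exp(-t*(a+b))"
proof -
  have D1: "((\<lambda>t. phi a b (-t)) has_real_derivative (phi1 a b (-t) * (-1))) (at t)"
    by (rule DERIV_chain2[OF phi_deriv]) (auto intro!: derivative_eq_intros)
  have D2: "((\<lambda>t. phi a b t * exp(-t*(a+b))) has_real_derivative
      (phi1 a b t * exp(-t*(a+b)) + phi a b t * (exp(-t*(a+b)) * (-(a+b))))) (at t)"
    by (auto intro!: derivative_eq_intros phi_deriv)
  have "(\<lambda>t. phi a b (-t)) = (\<lambda>t. phi a b t * exp(-t*(a+b)))" by (simp add: phi_neg)
  with D1 D2 have "phi1 a b (-t) * (-1) = phi1 a b t * exp(-t*(a+b)) + phi a b t * (exp(-t*(a+b)) * (-(a+b)))"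
    using DERIV_unique by metis
  thus ?thesis by (simp add: algebra_simps)
qed

lemma phi1_eq: assumes "t \<noteq> 0"
  shows "phi1 a b t = ((b*exp(t*b) - a*exp(t*a))*t - (exp(t*b)-exp(t*a)))/t^2"
proof -
  have "(phi a b has_real_derivative phi1 a b t) (at t)" by (rule phi_deriv)
  hence D1: "((\<lambda>t. (exp(t*b)-exp(t*a))/t) has_real_derivative phi1 a b t) (at t)"
    by (rule has_field_derivative_transform_within_open[where S="-{0}"]) (use assms phi_eq in auto)
  have D2: "((\<lambda>t. (exp(t*b)-exp(t*a))/t) has_real_derivative
     (((exp(t*b)*b - exp(t*a)*a)*t - (exp(t*b)-exp(t*a))*1)/(t*t))) (at t)"
    using assms by (auto intro!: derivative_eq_intros)
  from DERIV_unique[OF D1 D2] show ?thesis by (simp add: power2_eq_square algebra_simps)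
qed

lemma E_ne:
  assumes "x > 0" "y > 0" "x \<noteq> y" "t \<noteq> u"
  shows "extmean t u x y = (phi (ln x) (ln y) u / phi (ln x) (ln y) t) powr (1/(u-t))"
proof -
  let ?a = "ln x" and ?b = "ln y"
  have ab: "?a \<noteq> ?b" using assms by simp
  have px: "\<And>z. x powr z = exp(z * ?a)" "\<And>z. y powr z = exp(z * ?b)"
    using assms by (auto simp: powr_def)
  have nz: "\<And>z. z \<noteq> 0 \<Longrightarrow> exp(z * ?b) - exp(z * ?a) \<noteq> 0"
    using ab by auto
  have pp: "phi ?a ?b u / phi ?a ?b t > 0"
  proof -
    have "phi ?a ?b u / phi ?a ?b t = ((?b - ?a) * phi ?a ?b u) / ((?b - ?a) * phi ?a ?b t)"
      using ab by (simp del: mult_divide_mult_cancel_left_if)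
    thus ?thesis using phi_pos[OF ab, of u] phi_pos[OF ab, of t] divide_pos_pos by metis
  qed
  consider "t \<noteq> 0" "u \<noteq> 0" | "t \<noteq> 0" "u = 0" | "t = 0" "u \<noteq> 0" using assms by auto
  thus ?thesis
  proof cases
    case 1
    thus ?thesis using assms unfolding extmean_def
      by (simp add: px phi_eq nz field_simps)
  next
    case 2
    have "extmean t u x y = (phi ?a ?b t / phi ?a ?b 0) powr (1/t)"
      using 2 assms unfolding extmean_def by (simp add: px phi_eq phi_0)
    also have "\<dots> = (phi ?a ?b 0 / phi ?a ?b t) powr (1/(0-t))"
    proof -
      have q: "phi ?a ?b t / phi ?a ?b 0 > 0" using pp 2 by (auto simp add: zero_less_divide_iff)
      have "phi ?a ?b 0 / phi ?a ?b t = 1 / (phi ?a ?b t / phi ?a ?b 0)" by simp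
      moreover have "\<And>z::real. z > 0 \<Longrightarrow> z powr (1/t) = (1/z) powr (1/(0-t))"
        by (simp add: powr_def ln_div)
      ultimately show ?thesis using q by simp
    qed
    finally show ?thesis using 2 by simp
  next
    case 3
    thus ?thesis using assms unfolding extmean_def by (simp add: px phi_eq phi_0)
  qed
qed

lemma E_eq:
  assumes "x > 0" "y > 0" "x \<noteq> y"
  shows "extmean t t x y = exp (phi1 (ln x) (ln y) t / phi (ln x) (ln y) t)"
proof -
  let ?a = "ln x" and ?b = "ln y"
  have ab: "?a \<noteq> ?b" using assms by simp
  have px: "\<And>z. x powr z = exp(z * ?a)" "\<And>z. y powr z = exp(z * ?b)"
    using assms by (auto simp: powr_def)
  show ?thesis
  proof (cases "t = 0")
    case True
    have "sqrt (x*y) = (x*y) powr (1/2)" using assms by (simp add: powr_half_sqrt)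
    also have "\<dots> = exp ((?a + ?b)/2)" using assms by (simp add: powr_def ln_mult)
    also have "\<dots> = exp (phi1 ?a ?b 0 / phi ?a ?b 0)"
      using ab by (simp add: phi1_0 phi_0 power2_eq_square field_simps)
    finally show ?thesis using True assms unfolding extmean_def by simp
  next
    case False
    have nz: "exp(t * ?b) - exp(t * ?a) \<noteq> 0" "exp(t * ?a) - exp(t * ?b) \<noteq> 0"
      using ab False by auto
    have "extmean t t x y = exp (- 1 / t) * (exp (exp (t * ?a) * ?a) / exp (exp (t * ?b) * ?b)) powr (1 / (exp (t * ?a) - exp (t * ?b)))"
      using assms False unfolding extmean_def by (simp add: px)
    also have "\<dots> = exp (- 1 / t + (exp (t * ?a) * ?a - exp (t * ?b) * ?b) / (exp (t * ?a) - exp (t * ?b)))"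
      by (simp add: powr_def exp_diff[symmetric] exp_add[symmetric])
    also have "\<dots> = exp (phi1 ?a ?b t / phi ?a ?b t)"
      using False nz by (simp add: phi1_eq phi_eq field_simps power2_eq_square)
    finally show ?thesis .
  qed
qed


lemma phi_chain: "(g has_real_derivative g') (at z within S) \<Longrightarrow>
  ((\<lambda>z. phi a b (g z)) has_real_derivative phi1 a b (g z) * g') (at z within S)"
  by (rule DERIV_chain2[OF phi_deriv])

lemma phi1_chain: "(g has_real_derivative g') (at z within S) \<Longrightarrow>
  ((\<lambda>z. phi1 a b (g z)) has_real_derivative phi2 a b (g z) * g') (at z within S)"
  by (rule DERIV_chain2[OF phi1_deriv])

lemma keyF:
  fixes x y r s :: real
  assumes "x > 0" "y > 0"
  defines "F \<equiv> (\<lambda>w. extmean (r + w) (s + w) x y)"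
  shows "F v > 0 \<and> F v * F (-v-(s+r)) = x * y \<and> (\<exists>D. (F has_real_derivative D) (at v))"
proof (cases "x = y")
  case True
  hence "F = (\<lambda>_. x)" unfolding F_def extmean_def by simp
  thus ?thesis using True assms by (auto intro!: exI[where x=0] DERIV_const)
next
  case xy: False
  let ?a = "ln x" and ?b = "ln y"
  have ab: "?a \<noteq> ?b" using assms xy by simp
  have xyab: "x * y = exp (?a + ?b)" using assms by (simp add: exp_add)
  have nz: "\<And>z. phi ?a ?b z \<noteq> 0" using phi_nz[OF ab] .
  have rat: "\<And>u t. phi ?a ?b u / phi ?a ?b t > 0"
  proof -
    fix u t
    have "phi ?a ?b u / phi ?a ?b t = ((?b - ?a) * phi ?a ?b u) / ((?b - ?a) * phi ?a ?b t)"
      using ab by (simp del: mult_divide_mult_cancel_left_if)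
    thus "phi ?a ?b u / phi ?a ?b t > 0" using phi_pos[OF ab, of u] phi_pos[OF ab, of t] divide_pos_pos by metis
  qed
  show ?thesis
  proof (cases "r = s")
    case False
    let ?e = "1/(s-r)"
    have Fv: "\<And>w. F w = exp (?e * ln (phi ?a ?b (s+w) / phi ?a ?b (r+w)))"
      unfolding F_def using E_ne[OF assms(1,2) xy] False rat nz by (simp add: powr_def)
    have pos: "F v > 0" unfolding Fv by simp
    have "F (-v-(s+r)) = exp (?e * ln (phi ?a ?b (-(r+v)) / phi ?a ?b (-(s+v))))"
      unfolding Fv by (simp add: algebra_simps)
    also have "\<dots> = exp (?e * ln (phi ?a ?b (r+v) / phi ?a ?b (s+v) * exp ((s-r)*(?a+?b))))"
    proof -
      have "phi ?a ?b (-(r+v)) / phi ?a ?b (-(s+v)) = 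
        (phi ?a ?b (r+v) * exp(-(r+v)*(?a+?b))) / (phi ?a ?b (s+v) * exp(-(s+v)*(?a+?b)))"
        by (simp only: phi_neg)
      also have "\<dots> = phi ?a ?b (r+v) / phi ?a ?b (s+v) * (exp(-(r+v)*(?a+?b)) / exp(-(s+v)*(?a+?b)))"
        by simp
      also have "exp(-(r+v)*(?a+?b)) / exp(-(s+v)*(?a+?b)) = exp ((s-r)*(?a+?b))"
        by (simp add: exp_diff[symmetric] algebra_simps)
      finally show ?thesis by simp
    qed
    also have "\<dots> = exp (?e * ln (phi ?a ?b (r+v) / phi ?a ?b (s+v)) + (?a+?b))"
    proof -
      have "ln (phi ?a ?b (r+v) / phi ?a ?b (s+v) * exp ((s-r)*(?a+?b))) = ln (phi ?a ?b (r+v) / phi ?a ?b (s+v)) + (s-r)*(?a+?b)"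
        using rat[of "r+v" "s+v"] by (subst ln_mult) auto
      thus ?thesis using False by (simp add: field_simps)
    qed
    finally have Fm: "F (-v-(s+r)) = \<dots>" .
    have "F v * F (-v-(s+r)) = exp (?e * (ln (phi ?a ?b (s+v) / phi ?a ?b (r+v)) + ln (phi ?a ?b (r+v) / phi ?a ?b (s+v))) + (?a+?b))"
      unfolding Fm unfolding Fv by (simp add: exp_add[symmetric] algebra_simps)
    also have "ln (phi ?a ?b (s+v) / phi ?a ?b (r+v)) + ln (phi ?a ?b (r+v) / phi ?a ?b (s+v)) = 0"
    proof -
      have "ln (phi ?a ?b (s+v) / phi ?a ?b (r+v)) + ln (phi ?a ?b (r+v) / phi ?a ?b (s+v))
         = ln (phi ?a ?b (s+v) / phi ?a ?b (r+v) * (phi ?a ?b (r+v) / phi ?a ?b (s+v)))"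
        using rat[of "s+v" "r+v"] rat[of "r+v" "s+v"] by (simp only: ln_mult_pos)
      also have "\<dots> = 0" using nz[of "s+v"] nz[of "r+v"] by simp
      finally show ?thesis .
    qed
    finally have prod: "F v * F (-v-(s+r)) = x * y" using xyab by simp
    have "\<exists>D. ((\<lambda>w. exp (?e * ln (phi ?a ?b (s+w) / phi ?a ?b (r+w)))) has_real_derivative D) (at v)"
    proof -
      have A: "((\<lambda>w. phi ?a ?b (s+w)) has_real_derivative phi1 ?a ?b (s+v) * 1) (at v)"
        by (rule phi_chain) (auto intro!: derivative_eq_intros)
      have B: "((\<lambda>w. phi ?a ?b (r+w)) has_real_derivative phi1 ?a ?b (r+v) * 1) (at v)"
        by (rule phi_chain) (auto intro!: derivative_eq_intros)
      note C = DERIV_divide[OF A B nz]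
      note L = DERIV_chain2[OF DERIV_ln[OF rat[of "s+v" "r+v"]] C]
      note M = DERIV_cmult[OF L, of ?e]
      note X = DERIV_chain2[OF DERIV_exp M]
      show ?thesis using X by blast
    qed
    moreover have "F = (\<lambda>w. F w)" by simp
    ultimately have "\<exists>D. (F has_real_derivative D) (at v)" by (simp only: Fv)
    thus ?thesis using pos prod by blast
  next
    case True
    have Fv: "\<And>w. F w = exp (phi1 ?a ?b (r+w) / phi ?a ?b (r+w))"
      unfolding F_def using E_eq[OF assms(1,2) xy] True by simp
    have pos: "F v > 0" unfolding Fv by simp
    have "F (-v-(s+r)) = exp (phi1 ?a ?b (-(r+v)) / phi ?a ?b (-(r+v)))"
      unfolding Fv using True by (simp add: algebra_simps)
    also have "\<dots> = exp ((?a + ?b) - phi1 ?a ?b (r+v) / phi ?a ?b (r+v))"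
    proof -
      have e: "phi1 ?a ?b (-(r+v)) / phi ?a ?b (-(r+v)) =
        ((?a+?b) * phi ?a ?b (r+v) * exp(-(r+v)*(?a+?b)) - phi1 ?a ?b (r+v) * exp(-(r+v)*(?a+?b))) /
        (phi ?a ?b (r+v) * exp(-(r+v)*(?a+?b)))"
        by (simp only: phi1_neg phi_neg)
      have "\<dots> = (?a + ?b) - phi1 ?a ?b (r+v) / phi ?a ?b (r+v)"
        using nz[of "r+v"] by (simp add: field_simps)
      thus ?thesis using e by simp
    qed
    finally have "F v * F (-v-(s+r)) = exp (?a + ?b)"
      unfolding Fv by (simp add: exp_add[symmetric])
    hence prod: "F v * F (-v-(s+r)) = x * y" using xyab by simp
    have "\<exists>D. ((\<lambda>w. exp (phi1 ?a ?b (r+w) / phi ?a ?b (r+w))) has_real_derivative D) (at v)"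
    proof -
      have A: "((\<lambda>w. phi1 ?a ?b (r+w)) has_real_derivative phi2 ?a ?b (r+v) * 1) (at v)"
        by (rule phi1_chain) (auto intro!: derivative_eq_intros)
      have B: "((\<lambda>w. phi ?a ?b (r+w)) has_real_derivative phi1 ?a ?b (r+v) * 1) (at v)"
        by (rule phi_chain) (auto intro!: derivative_eq_intros)
      note C = DERIV_divide[OF A B nz]
      note X = DERIV_chain2[OF DERIV_exp C]
      show ?thesis using X by blast
    qed
    moreover have "F = (\<lambda>w. F w)" by simp
    ultimately have "\<exists>D. (F has_real_derivative D) (at v)" by (simp only: Fv)
    thus ?thesis using pos prod by blast
  qed
qed


theorem mainTheorem7:
  fixes x y r s :: real
  assumes "x > 0" and "y > 0"
  defines "F \<equiv> (\<lambda>w. extmean (r + w) (s + w) x y)"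
  shows "\<forall>w. deriv F w / F w = deriv F (- w - (s + r)) / F (- w - (s + r))
            \<and> F w * F (- w) = x * y * F w / F (w - (s + r))"
proof
  fix w
  have K: "\<And>v. F v > 0 \<and> F v * F (-v-(s+r)) = x * y \<and> (\<exists>D. (F has_real_derivative D) (at v))"
    unfolding F_def by (rule keyF[OF assms(1,2)])
  let ?g = "- w - (s + r)"
  have Fg: "F = (\<lambda>v. x * y / F (-v-(s+r)))"
  proof
    fix v show "F v = x * y / F (-v-(s+r))"
      using K[of v] K[of "-v-(s+r)"] by (simp add: field_simps)
  qed
  obtain D where D: "(F has_real_derivative D) (at ?g)" using K by blast
  hence dg: "deriv F ?g = D" by (rule DERIV_imp_deriv)
  have D2: "((\<lambda>v. F (-v-(s+r))) has_real_derivative D * (-1)) (at w)"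
    by (rule DERIV_chain2[where f=F and g="\<lambda>v. -v-(s+r)" and x=w, OF D]) (auto intro!: derivative_eq_intros)
  have D3: "((\<lambda>v. x * y / F (-v-(s+r))) has_real_derivative (0 * F ?g - x * y * (D * (-1))) / (F ?g * F ?g)) (at w)"
    using DERIV_divide[OF DERIV_const D2, of "x*y"] K[of ?g] by simp
  hence "deriv F w = (0 * F ?g - x * y * (D * (-1))) / (F ?g * F ?g)"
    by (subst Fg) (rule DERIV_imp_deriv)
  moreover have "F w * F ?g = x * y" using K[of w] by simp
  moreover have "F w > 0" "F ?g > 0" using K by auto
  ultimately have 1: "deriv F w / F w = deriv F ?g / F ?g"
    apply -
  proof -
    assume a1: "deriv F w = (0 * F ?g - x * y * (D * (-1))) / (F ?g * F ?g)"
      and a2: "F w * F ?g = x * y" and a3: "F w > 0" "F ?g > 0"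
    have "deriv F w = D * F w / F ?g" unfolding a1 a2[symmetric] using a3 by (simp add: field_simps)
    thus ?thesis unfolding dg using a3 by (simp add: field_simps)
  qed
  have "F (-w) * F (w - (s+r)) = x * y" using K[of "-w"] by simp
  hence 2: "F w * F (- w) = x * y * F w / F (w - (s + r))"
    using K[of "w - (s+r)"] by (simp add: field_simps)
  show "deriv F w / F w = deriv F ?g / F ?g \<and> F w * F (- w) = x * y * F w / F (w - (s + r))"
    using 1 2 by blast
qed

end
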